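(* Let $K$ be the complete graph on $X \cup Y$, where $X$ and $Y$ are disjoint sets of size $n$. Let $F$ be a subgraph of $K$ containing no triangle that meets both $X$ and $Y$. Then $|F|\leq n^2$.
   Context: $|F|$ denotes the number of edges of $F$. *)

theory Defs
  imports Main
begin

definition complete_edges :: "'a set \<Rightarrow> 'a set set" where
  "complete_edges V = {e. e \<subseteq> V \<and> card e = 2}"

definition is_triangle :: "'a set set \<Rightarrow> 'a \<Rightarrow> 'a \<Rightarrow> 'a \<Rightarrow> bool" where
  "is_triangle F a b c \<longleftrightarrow> a \<noteq> b \<and> b \<noteq> c \<and> a \<noteq> c \<and>
     {a,b} \<in> F \<and> {b,c} \<in> F \<and> {a,c} \<in> F"

end

theory Submission
  imports Defs
begin

lemma no_cross:
  assumes "finite X" "finite Y" "card X = n" "card Y = n"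
    and "F \<subseteq> complete_edges (X \<union> Y)"
    and "\<forall>e\<in>F. e \<subseteq> X \<or> e \<subseteq> Y"
  shows "card F \<le> n ^ 2"
proof -
  have "F \<subseteq> {e. e \<subseteq> X \<and> card e = 2} \<union> {e. e \<subseteq> Y \<and> card e = 2}"
    using assms(5,6) unfolding complete_edges_def by blast
  hence "card F \<le> card ({e. e \<subseteq> X \<and> card e = 2} \<union> {e. e \<subseteq> Y \<and> card e = 2})"
    using assms(1,2) by (intro card_mono) auto
  also have "\<dots> \<le> card {e. e \<subseteq> X \<and> card e = 2} + card {e. e \<subseteq> Y \<and> card e = 2}"
    by (rule card_Un_le)
  also have "\<dots> = 2 * (n choose 2)" using assms(1-4) by (simp add: n_subsets)
  also have "\<dots> \<le> n ^ 2" 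
  proof -
    have "2 * (n choose 2) \<le> n * (n - 1)" unfolding choose_two
      by (metis div_times_less_eq_dividend mult.commute)
    also have "\<dots> \<le> n * n" by simp
    finally show ?thesis by (simp add: power2_eq_square)
  qed
  finally show ?thesis .
qed

lemma main_ind:
  "\<And>X Y F. finite X \<Longrightarrow> finite Y \<Longrightarrow> X \<inter> Y = {} \<Longrightarrow> card X = n \<Longrightarrow> card Y = n \<Longrightarrow>
    F \<subseteq> complete_edges (X \<union> Y) \<Longrightarrow>
    \<forall>a b c. is_triangle F a b c \<longrightarrow> \<not> ({a,b,c} \<inter> X \<noteq> {} \<and> {a,b,c} \<inter> Y \<noteq> {}) \<Longrightarrow>
    card F \<le> n ^ 2"
proof (induction n)
  case 0
  have "\<forall>e\<in>F. e \<subseteq> X \<or> e \<subseteq> Y" using 0 by (auto simp: complete_edges_def)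
  then show ?case using no_cross[of X Y 0 F] 0 by auto
next
  case (Suc m)
  note fX = Suc.prems(1) and fY = Suc.prems(2) and dis = Suc.prems(3)
    and cX = Suc.prems(4) and cY = Suc.prems(5) and FK = Suc.prems(6) and tri = Suc.prems(7)
  show ?case
  proof (cases "\<forall>e\<in>F. e \<subseteq> X \<or> e \<subseteq> Y")
    case True
    then show ?thesis using no_cross[OF fX fY cX cY FK] by blast
  next
    case False
    then obtain e where eF: "e \<in> F" and ne: "\<not> (e \<subseteq> X \<or> e \<subseteq> Y)" by blast
    from eF FK have eXY: "e \<subseteq> X \<union> Y" and ce: "card e = 2" unfolding complete_edges_def by auto
    then obtain a b where eab: "e = {a,b}" "a \<noteq> b" by (auto simp: card_2_iff)
    obtain x y where xX: "x \<in> X" and yY: "y \<in> Y" and xyF: "{x,y} \<in> F"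
    proof (cases "a \<in> X")
      case True
      then have "b \<in> Y" using ne eXY eab by auto
      then show ?thesis using that True eF eab by auto
    next
      case False
      then have "a \<in> Y" "b \<in> X" using ne eXY eab by auto
      then show ?thesis using that eF eab by (auto simp: insert_commute)
    qed
    have xy: "x \<noteq> y" using xX yY dis by auto
    define X' where "X' = X - {x}"
    define Y' where "Y' = Y - {y}"
    define F' where "F' = {e\<in>F. e \<subseteq> X' \<union> Y'}"
    have XY': "X' \<union> Y' = (X \<union> Y) - {x,y}" using xX yY dis unfolding X'_def Y'_def by auto
    have finF: "finite F"
    proof -
      have "F \<subseteq> Pow (X \<union> Y)" using FK unfolding complete_edges_def by auto
      thus ?thesis using fX fY finite_subset by blast
    qed
    have IH: "card F' \<le> m ^ 2"
    proof (rule Suc.IH)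
      show "finite X'" "finite Y'" using fX fY unfolding X'_def Y'_def by auto
      show "X' \<inter> Y' = {}" using dis unfolding X'_def Y'_def by auto
      show "card X' = m" using cX xX fX unfolding X'_def by auto
      show "card Y' = m" using cY yY fY unfolding Y'_def by auto
      show "F' \<subseteq> complete_edges (X' \<union> Y')" using FK unfolding F'_def complete_edges_def by auto
      show "\<forall>a b c. is_triangle F' a b c \<longrightarrow> \<not> ({a,b,c} \<inter> X' \<noteq> {} \<and> {a,b,c} \<inter> Y' \<noteq> {})"
      proof (intro allI impI)
        fix a b c assume "is_triangle F' a b c"
        hence "is_triangle F a b c" unfolding is_triangle_def F'_def by auto
        with tri have "\<not> ({a,b,c} \<inter> X \<noteq> {} \<and> {a,b,c} \<inter> Y \<noteq> {})" by blast
        thus "\<not> ({a,b,c} \<inter> X' \<noteq> {} \<and> {a,b,c} \<inter> Y' \<noteq> {})" unfolding X'_def Y'_def by blast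
      qed
    qed
    define Nx where "Nx = {z. {x,z} \<in> F} - {y}"
    define Ny where "Ny = {z. {y,z} \<in> F} - {x}"
    have NxS: "Nx \<subseteq> (X \<union> Y) - {x,y}"
    proof
      fix z assume z: "z \<in> Nx"
      hence "{x,z} \<in> F" "z \<noteq> y" unfolding Nx_def by auto
      with FK have "{x,z} \<subseteq> X \<union> Y" "card {x,z} = 2" unfolding complete_edges_def by auto
      thus "z \<in> (X \<union> Y) - {x,y}" using \<open>z \<noteq> y\<close> by (cases "z = x") auto
    qed
    have NyS: "Ny \<subseteq> (X \<union> Y) - {x,y}"
    proof
      fix z assume z: "z \<in> Ny"
      hence "{y,z} \<in> F" "z \<noteq> x" unfolding Ny_def by auto
      with FK have "{y,z} \<subseteq> X \<union> Y" "card {y,z} = 2" unfolding complete_edges_def by auto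
      thus "z \<in> (X \<union> Y) - {x,y}" using \<open>z \<noteq> x\<close> by (cases "z = y") auto
    qed
    have disN: "Nx \<inter> Ny = {}"
    proof (rule ccontr)
      assume "Nx \<inter> Ny \<noteq> {}"
      then obtain z where z: "z \<in> Nx" "z \<in> Ny" by blast
      hence zF: "{x,z} \<in> F" "{y,z} \<in> F" unfolding Nx_def Ny_def by auto
      have zn: "z \<noteq> x" "z \<noteq> y" using z NxS by auto
      have "is_triangle F x y z" unfolding is_triangle_def using zF xyF xy zn
        by (auto simp: insert_commute)
      with tri xX yY show False by blast
    qed
    have finXY: "finite ((X \<union> Y) - {x,y})" using fX fY by auto
    have cardXY: "card ((X \<union> Y) - {x,y}) = 2 * m"
    proof -
      have "card (X \<union> Y) = 2 * Suc m" using card_Un_disjoint[OF fX fY dis] cX cY by simp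
      moreover have "{x,y} \<subseteq> X \<union> Y" using xX yY by auto
      ultimately show ?thesis using fX fY xy by (simp add: card_Diff_subset)
    qed
    have cN: "card Nx + card Ny \<le> 2 * m"
    proof -
      have "card Nx + card Ny = card (Nx \<union> Ny)"
        using disN finite_subset[OF NxS finXY] finite_subset[OF NyS finXY]
        by (simp add: card_Un_disjoint)
      also have "\<dots> \<le> 2 * m" using cardXY card_mono[OF finXY] NxS NyS
        by (metis Un_least)
      finally show ?thesis .
    qed
    have sub: "F - F' \<subseteq> insert {x,y} ((\<lambda>z. {x,z}) ` Nx \<union> (\<lambda>z. {y,z}) ` Ny)"
    proof
      fix e assume e: "e \<in> F - F'"
      hence eF: "e \<in> F" and nsub: "\<not> e \<subseteq> (X \<union> Y) - {x,y}" unfolding F'_def XY' by auto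
      from eF FK have "e \<subseteq> X \<union> Y" "card e = 2" unfolding complete_edges_def by auto
      then obtain a b where eab: "e = {a,b}" "a \<noteq> b" by (auto simp: card_2_iff)
      have "x \<in> e \<or> y \<in> e" using nsub \<open>e \<subseteq> X \<union> Y\<close> by blast
      thus "e \<in> insert {x,y} ((\<lambda>z. {x,z}) ` Nx \<union> (\<lambda>z. {y,z}) ` Ny)"
      proof
        assume "x \<in> e"
        then obtain z where ez: "e = {x,z}" using eab by auto
        show ?thesis
        proof (cases "z = y")
          case True then show ?thesis using ez by simp
        next
          case False
          then have "z \<in> Nx" unfolding Nx_def using eF ez by auto
          then show ?thesis using ez by auto
        qed
      next
        assume "y \<in> e"
        then obtain z where ez: "e = {y,z}" using eab by auto
        show ?thesis
        proof (cases "z = x")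
          case True then show ?thesis using ez by (simp add: insert_commute)
        next
          case False
          then have "z \<in> Ny" unfolding Ny_def using eF ez by auto
          then show ?thesis using ez by auto
        qed
      qed
    qed
    have finN: "finite Nx" "finite Ny" using finite_subset[OF NxS finXY] finite_subset[OF NyS finXY] by auto
    have "card (F - F') \<le> card (insert {x,y} ((\<lambda>z. {x,z}) ` Nx \<union> (\<lambda>z. {y,z}) ` Ny))"
      using sub finN by (intro card_mono) auto
    also have "\<dots> \<le> Suc (card ((\<lambda>z. {x,z}) ` Nx \<union> (\<lambda>z. {y,z}) ` Ny))"
      by (rule card_insert_le_m1) auto
    also have "\<dots> \<le> Suc (card ((\<lambda>z. {x,z}) ` Nx) + card ((\<lambda>z. {y,z}) ` Ny))"
      using card_Un_le by (metis Suc_le_mono)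
    also have "\<dots> \<le> Suc (card Nx + card Ny)"
      using card_image_le[OF finN(1)] card_image_le[OF finN(2)] by (metis Suc_le_mono add_mono)
    finally have cD: "card (F - F') \<le> Suc (2 * m)" using cN by linarith
    have "F' \<subseteq> F" unfolding F'_def by auto
    hence "card F = card F' + card (F - F')" using finF
      by (metis card_Diff_subset card_mono diff_add_inverse2 le_add_diff_inverse2 finite_subset add.commute)
    also have "\<dots> \<le> m ^ 2 + Suc (2 * m)" using IH cD by linarith
    also have "\<dots> = (Suc m) ^ 2" by (simp add: power2_eq_square)
    finally show ?thesis .
  qed
qed

theorem mainTheorem3:
  fixes X Y :: "'a set" and F :: "'a set set" and n :: nat
  assumes "finite X" and "finite Y" and "X \<inter> Y = {}"
    and "card X = n" and "card Y = n"
    and "F \<subseteq> complete_edges (X \<union> Y)"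
    and "\<forall>a b c. is_triangle F a b c \<longrightarrow>
           \<not> ({a,b,c} \<inter> X \<noteq> {} \<and> {a,b,c} \<inter> Y \<noteq> {})"
  shows "card F \<le> n ^ 2"
  using main_ind assms by blast

end
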